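(* Let $\psi$ be a colouring. 1. The equation $\psi\ltimes\xi=\psi[+1]$ has a regular summable solution $\xi\in\mathcal C_0$ if and only if $\psi$, viewed as an element of $\mathcal C_1$, is regular. 2. Suppose that $\psi$ is regular, and let $d\ge0$. Then $\xi\mapsto\psi\ltimes\xi$ is a $\mathbb k[[h]]$-linear bijection from the set of regular summable sequences in $\mathcal C_d$ onto the set of regular sequences of Verma type in $\mathcal C_d$.
   Context: $\mathbb k$ is a field of characteristic zero, and $\mathbb k[[h]]$ is the ring of formal power series over $\mathbb k$. A colouring is a sequence $\psi=(\psi^k)_{k\ge1}$ of functions $\psi^k:\mathbb Z\to\mathbb k[[h]]$ satisfying: - (C1) $\psi^k(n)\equiv k(n-k+1)\bmod h$; - (C2) $\psi^{n+1}(n)=0$ for all $n\ge0$; - (C3) $\psi^{n+k+1}(n)=\psi^k(-n-2)$ for all $k\ge1$ and all $n\ge0$. Sequences. For $d\in\mathbb N$, $\mathcal C_d$ is the $\mathbb k[[h]]$-module of sequences $f=(f^k)_{k\ge d}$ of functions $f^k:\mathbb Z\to\mathbb k[[h]]$. We write $f^k(n)=\sum_{m\ge0}f^k_m(n)h^m$ with $f^k_m:\mathbb Z\to\mathbb k$. - $f$ is summable if for each $m$ one has $f^k_m\equiv0$ for all sufficiently large $k$. - $f$ is regular if each $f^k_m$ is a polynomial function of $n$, and for each $m$ the degree of $f^k_m$ is bounded independently of $k$. - $f$ is of Verma type if $f^k(n)=0$ for all $k\ge d$ and $n\ge0$ with $n+1\le k\le n+d$, and $f^{n+k+1}(n)=f^k(-n-2)$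 for all $k\ge d$ and $n\ge0$. A colouring is an element of $\mathcal C_1$. Define $\psi[+1]\in\mathcal C_0$ by $(\psi[+1])^k=\psi^{k+1}$ for $k\ge0$. For $\xi\in\mathcal C_d$, define $\psi\ltimes\xi\in\mathcal C_d$ by $$(\psi\ltimes\xi)^k(n)=\sum_{a=d}^k\Big(\prod_{b=k-a+1}^k\psi^b(n)\Big)\xi^a(n-2k)\qquad(k\ge d),$$ where the empty product is $1$. *)

theory Defs
  imports "HOL-Computational_Algebra.Formal_Power_Series" "HOL-Computational_Algebra.Polynomial"
begin

text \<open>A sequence f = (f^k)_{k >= d} of functions Z -> k[[h]] is represented as a function
  nat => int => 'a fps whose entries with index k < d are zero (canonical representative).\<close>

type_synonym 'a seq = "nat \<Rightarrow> int \<Rightarrow> 'a fps"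

definition Cseq :: "nat \<Rightarrow> 'a::field_char_0 seq set" where
  "Cseq d = {f. \<forall>k<d. f k = (\<lambda>n. 0)}"

definition colouring :: "'a::field_char_0 seq \<Rightarrow> bool" where
  "colouring \<psi> \<longleftrightarrow> \<psi> \<in> Cseq 1
     \<and> (\<forall>k\<ge>1. \<forall>n. fps_nth (\<psi> k n) 0 = of_int (int k * (n - int k + 1)))
     \<and> (\<forall>n::nat. \<psi> (n + 1) (int n) = 0)
     \<and> (\<forall>k\<ge>1. \<forall>n::nat. \<psi> (n + k + 1) (int n) = \<psi> k (- int n - 2))"

definition summable_seq :: "nat \<Rightarrow> 'a::field_char_0 seq \<Rightarrow> bool" where
  "summable_seq d f \<longleftrightarrow> (\<forall>m. \<exists>K. \<forall>k\<ge>max d K. \<forall>n. fps_nth (f k n) m = 0)"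

definition regular_seq :: "nat \<Rightarrow> 'a::field_char_0 seq \<Rightarrow> bool" where
  "regular_seq d f \<longleftrightarrow> (\<forall>m. \<exists>D. \<forall>k\<ge>d. \<exists>p :: 'a poly.
      degree p \<le> D \<and> (\<forall>n. fps_nth (f k n) m = poly p (of_int n)))"

definition verma_type :: "nat \<Rightarrow> 'a::field_char_0 seq \<Rightarrow> bool" where
  "verma_type d f \<longleftrightarrow>
     (\<forall>k\<ge>d. \<forall>n::nat. n + 1 \<le> k \<and> k \<le> n + d \<longrightarrow> f k (int n) = 0)
   \<and> (\<forall>k\<ge>d. \<forall>n::nat. f (n + k + 1) (int n) = f k (- int n - 2))"

definition shift1 :: "'a::field_char_0 seq \<Rightarrow> 'a seq" where
  "shift1 \<psi> = (\<lambda>k. \<psi> (k + 1))"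

definition ltimes :: "nat \<Rightarrow> 'a::field_char_0 seq \<Rightarrow> 'a seq \<Rightarrow> 'a seq" where
  "ltimes d \<psi> \<xi> = (\<lambda>k n. if k < d then 0 else
      (\<Sum>a=d..k. (\<Prod>b=k-a+1..k. \<psi> b n) * \<xi> a (n - 2 * int k)))"

end

theory Submission
  imports Defs
begin

unbundle fps_syntax


definition ispoly :: "nat \<Rightarrow> (int \<Rightarrow> 'a::field_char_0) \<Rightarrow> bool" where
  "ispoly D f \<longleftrightarrow> (\<exists>p :: 'a poly. degree p \<le> D \<and> (\<forall>n. f n = poly p (of_int n)))"

lemma ispoly_mono: "ispoly D f \<Longrightarrow> D \<le> E \<Longrightarrow> ispoly E f"
  unfolding ispoly_def by (meson order_trans)

lemma ispoly_const: "ispoly D (\<lambda>n. c)"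
  unfolding ispoly_def by (rule exI[of _ "[:c:]"]) auto

lemma ispoly_zero: "ispoly D (\<lambda>n. 0)"
  using ispoly_const .

lemma ispoly_id: "ispoly 1 (\<lambda>n. of_int n)"
  unfolding ispoly_def by (rule exI[of _ "[:0,1:]"]) auto

lemma ispoly_add: "ispoly D f \<Longrightarrow> ispoly D g \<Longrightarrow> ispoly D (\<lambda>n. f n + g n)"
  unfolding ispoly_def
  apply clarify
  subgoal for p q by (rule exI[of _ "p+q"]) (auto intro: order_trans[OF degree_add_le_max])
  done

lemma ispoly_uminus: "ispoly D f \<Longrightarrow> ispoly D (\<lambda>n. - f n)"
  unfolding ispoly_def
  apply clarify
  subgoal for p by (rule exI[of _ "-p"]) auto
  done

lemma ispoly_diff: "ispoly D f \<Longrightarrow> ispoly D g \<Longrightarrow> ispoly D (\<lambda>n. f n - g n)"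
  using ispoly_add[of D f "\<lambda>n. - g n"] ispoly_uminus[of D g] by simp

lemma ispoly_mult: "ispoly D f \<Longrightarrow> ispoly E g \<Longrightarrow> ispoly (D+E) (\<lambda>n. f n * g n)"
  unfolding ispoly_def
  apply clarify
  subgoal for p q by (rule exI[of _ "p*q"]) (auto intro: order_trans[OF degree_mult_le])
  done

lemma ispoly_shift: "ispoly D f \<Longrightarrow> ispoly D (\<lambda>n. f (n + c))"
  unfolding ispoly_def
  apply clarify
  subgoal for p by (rule exI[of _ "pcompose p [:of_int c, 1:]"]) (auto simp: poly_pcompose degree_pcompose add.commute)
  done

lemma ispoly_sum: "finite S \<Longrightarrow> (\<And>a. a \<in> S \<Longrightarrow> ispoly D (f a)) \<Longrightarrow> ispoly D (\<lambda>n. \<Sum>a\<in>S. f a n)"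
  by (induction S rule: finite_induct) (auto intro: ispoly_add ispoly_zero)

lemma ispoly_prod: "finite S \<Longrightarrow> (\<And>a. a \<in> S \<Longrightarrow> ispoly D (f a)) \<Longrightarrow> ispoly (card S * D) (\<lambda>n. \<Prod>a\<in>S. f a n)"
proof (induction S rule: finite_induct)
  case empty then show ?case by (simp add: ispoly_const)
next
  case (insert x F)
  then have "ispoly (D + card F * D) (\<lambda>n. f x n * (\<Prod>a\<in>F. f a n))"
    by (intro ispoly_mult) auto
  then show ?case using insert by simp
qed

lemma ispoly_zero_inf:
  assumes "ispoly D f" "\<And>n. n \<ge> c \<Longrightarrow> f n = 0"
  shows "f n = 0"
proof -
  obtain p where p: "\<And>n. f n = poly p (of_int n)" using assms(1) unfolding ispoly_def by auto
  have "p = 0"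
  proof (rule ccontr)
    assume "p \<noteq> 0"
    then have fin: "finite {x. poly p x = 0}" by (rule poly_roots_finite)
    have "of_int ` {c..} \<subseteq> {x. poly p x = 0}" using assms(2) p by auto
    then have "finite (of_int ` {c..} :: 'a set)" using fin finite_subset by blast
    moreover have "inj_on (of_int :: int \<Rightarrow> 'a) {c..}" by (auto simp: inj_on_def)
    ultimately have "finite {c..}" using finite_image_iff by blast
    then show False using infinite_Ici by blast
  qed
  then show ?thesis using p by simp
qed

lemma ispoly_zero_card:
  assumes "ispoly D f" "finite A" "card A > D" "\<And>n. n \<in> A \<Longrightarrow> f n = 0"
  shows "f n = 0"
proof -
  obtain p where p: "\<And>n. f n = poly p (of_int n)" and dp: "degree p \<le> D" using assms(1) unfolding ispoly_def by auto
  have "p = 0"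
  proof (rule ccontr)
    assume "p \<noteq> 0"
    then have b: "card {x. poly p x = 0} \<le> degree p" by (rule card_poly_roots_bound)
    have fin: "finite {x. poly p x = 0}" using \<open>p\<noteq>0\<close> by (rule poly_roots_finite)
    have "of_int ` A \<subseteq> {x. poly p x = 0}" using assms(4) p by auto
    then have "card (of_int ` A :: 'a set) \<le> card {x. poly p x = 0}" using fin card_mono by blast
    moreover have "inj_on (of_int :: int \<Rightarrow> 'a) A" by (auto simp: inj_on_def)
    ultimately have "card A \<le> degree p" using b card_image by fastforce
    then show False using assms(3) dp by simp
  qed
  then show ?thesis using p by simp
qed



definition ltG :: "nat \<Rightarrow> (nat \<Rightarrow> int \<Rightarrow> 'b::comm_ring_1) \<Rightarrow> (nat \<Rightarrow> int \<Rightarrow> 'b) \<Rightarrow> nat \<Rightarrow> int \<Rightarrow> 'b" where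
  "ltG d \<psi> \<xi> = (\<lambda>k n. if k < d then 0 else
      (\<Sum>a=d..k. (\<Prod>b=k-a+1..k. \<psi> b n) * \<xi> a (n - 2 * int k)))"

lemma ltimes_ltG: "ltimes d \<psi> \<xi> = ltG d \<psi> \<xi>"
  by (simp add: ltimes_def ltG_def)

lemma ltG_vanish:
  assumes C2: "\<And>n::nat. \<psi> (n+1) (int n) = 0"
    and "n+1 \<le> k" "k \<le> n+d"
  shows "ltG d \<psi> \<xi> k (int n) = 0"
proof -
  have "(\<Prod>b=k-a+1..k. \<psi> b (int n)) = 0" if "a \<in> {d..k}" for a
    using that assms by (intro prod_zero) (auto intro!: bexI[of _ "n+1"])
  then show ?thesis unfolding ltG_def by simp
qed

lemma ltG_sym:
  assumes C2: "\<And>n::nat. \<psi> (n+1) (int n) = 0"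
    and C3: "\<And>k n::nat. k \<ge> 1 \<Longrightarrow> \<psi> (n+k+1) (int n) = \<psi> k (- int n - 2)"
    and "k \<ge> d"
  shows "ltG d \<psi> \<xi> (n+k+1) (int n) = ltG d \<psi> \<xi> k (- int n - 2)"
proof -
  let ?f = "\<lambda>a. (\<Prod>b=n+k+1-a+1..n+k+1. \<psi> b (int n)) * \<xi> a (int n - 2 * int (n+k+1))"
  have split: "(\<Sum>a=d..k+(n+1). ?f a) = (\<Sum>a=d..k. ?f a) + (\<Sum>a=k+1..k+(n+1). ?f a)"
    using assms(3) by (intro sum.ub_add_nat) simp
  have z: "?f a = 0" if "a \<in> {k+1..k+(n+1)}" for a
  proof -
    have "(\<Prod>b=n+k+1-a+1..n+k+1. \<psi> b (int n)) = 0"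
      using that C2 by (intro prod_zero) (auto intro!: bexI[of _ "n+1"])
    then show ?thesis by simp
  qed
  have e: "?f a = (\<Prod>b=k-a+1..k. \<psi> b (- int n - 2)) * \<xi> a (- int n - 2 - 2 * int k)"
    if "a \<in> {d..k}" for a
  proof -
    have eqs: "{n+k+1-a+1..n+k+1} = {(k-a+1)+(n+1)..k+(n+1)}" using that by auto
    have "(\<Prod>b=n+k+1-a+1..n+k+1. \<psi> b (int n)) = (\<Prod>b\<in>{(k-a+1)+(n+1)..k+(n+1)}. \<psi> b (int n))"
      by (simp only: eqs)
    also have "\<dots> = (\<Prod>b=k-a+1..k. \<psi> (b+(n+1)) (int n))"
      by (rule prod.shift_bounds_cl_nat_ivl)
    also have "\<dots> = (\<Prod>b=k-a+1..k. \<psi> b (- int n - 2))"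
    proof (rule prod.cong)
      fix b assume "b \<in> {k-a+1..k}"
      then have "b \<ge> 1" by auto
      then show "\<psi> (b+(n+1)) (int n) = \<psi> b (- int n - 2)"
        using C3[of b n] by (simp add: add.commute add.left_commute)
    qed simp
    finally show ?thesis by (simp add: algebra_simps)
  qed
  have "ltG d \<psi> \<xi> (n+k+1) (int n) = (\<Sum>a=d..k+(n+1). ?f a)"
    using assms(3) unfolding ltG_def by (simp add: add.commute add.left_commute)
  also have "\<dots> = (\<Sum>a=d..k. ?f a)"
  proof -
    have "(\<Sum>a=k+1..k+(n+1). ?f a) = 0" using z by (intro sum.neutral) blast
    then show ?thesis by (simp only: split add_0_right)
  qed
  also have "\<dots> = ltG d \<psi> \<xi> k (- int n - 2)"
    using assms(3) e unfolding ltG_def by (auto intro!: sum.cong)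
  finally show ?thesis .
qed



lemma ltG_lin: "ltG d \<psi> (\<lambda>k n. c * \<xi>1 k n + \<xi>2 k n) = (\<lambda>k n. c * ltG d \<psi> \<xi>1 k n + ltG d \<psi> \<xi>2 k n)"
  unfolding ltG_def by (auto simp: sum_distrib_left sum.distrib algebra_simps intro!: ext)

lemma ltG_add: "ltG d \<psi> (\<lambda>k n. \<xi>1 k n + \<xi>2 k n) = (\<lambda>k n. ltG d \<psi> \<xi>1 k n + ltG d \<psi> \<xi>2 k n)"
  using ltG_lin[of d \<psi> 1 \<xi>1 \<xi>2] by simp

lemma ltG_diff: "ltG d \<psi> (\<lambda>k n. \<xi>1 k n - \<xi>2 k n) = (\<lambda>k n. ltG d \<psi> \<xi>1 k n - ltG d \<psi> \<xi>2 k n)"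
  using ltG_lin[of d \<psi> "-1" \<xi>2 \<xi>1] by (simp add: algebra_simps)

lemma ltG_zero: "ltG d \<psi> (\<lambda>k n. 0) = (\<lambda>k n. 0)"
  unfolding ltG_def by (auto intro!: ext)

lemma ltG_lower:
  assumes "\<xi> d = (\<lambda>n. 0)"
  shows "ltG d \<psi> \<xi> = ltG (Suc d) \<psi> \<xi>"
proof (intro ext)
  fix k n
  show "ltG d \<psi> \<xi> k n = ltG (Suc d) \<psi> \<xi> k n"
  proof (cases "k \<ge> Suc d")
    case True
    then have "{d..k} = insert d {Suc d..k}" by auto
    then show ?thesis using True assms unfolding ltG_def by simp
  next
    case False
    then show ?thesis using assms unfolding ltG_def
      by (cases "k = d") auto
  qed
qed

lemma ltG_single:
  assumes "a0 \<in> {d..k}" "\<And>a. a \<in> {d..k} \<Longrightarrow> a \<noteq> a0 \<Longrightarrow> \<xi> a (n - 2 * int k) = 0"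
  shows "ltG d \<psi> \<xi> k n = (\<Prod>b=k-a0+1..k. \<psi> b n) * \<xi> a0 (n - 2 * int k)"
proof -
  have "ltG d \<psi> \<xi> k n = (\<Sum>a\<in>{d..k}. (\<Prod>b=k-a+1..k. \<psi> b n) * \<xi> a (n - 2 * int k))"
    using assms(1) unfolding ltG_def by auto
  also have "\<dots> = (\<Prod>b=k-a0+1..k. \<psi> b n) * \<xi> a0 (n - 2 * int k)"
    using assms by (subst sum.remove[of _ a0]) (auto intro!: sum.neutral)
  finally show ?thesis .
qed

lemma ltG_inj:
  fixes \<psi> \<zeta> :: "nat \<Rightarrow> int \<Rightarrow> 'b::idom"
  assumes z: "\<And>k n. k \<ge> d \<Longrightarrow> ltG d \<psi> \<zeta> k n = 0"
    and low: "\<And>k. k < d \<Longrightarrow> \<zeta> k = (\<lambda>n. 0)"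
    and nz: "\<And>b n::nat. 1 \<le> b \<Longrightarrow> b \<le> n \<Longrightarrow> \<psi> b (int n) \<noteq> 0"
    and ext: "\<And>a. (\<And>n::nat. n \<ge> a \<Longrightarrow> \<zeta> a (int n - 2 * int a) = 0) \<Longrightarrow> \<zeta> a = (\<lambda>n. 0)"
  shows "\<zeta> k = (\<lambda>n. 0)"
proof (induction k rule: less_induct)
  case (less k)
  show ?case
  proof (cases "k < d")
    case True then show ?thesis by (rule low)
  next
    case False
    show ?thesis
    proof (rule ext)
      fix n :: nat assume nk: "n \<ge> k"
      have "ltG d \<psi> \<zeta> k (int n) = (\<Prod>b=k-k+1..k. \<psi> b (int n)) * \<zeta> k (int n - 2 * int k)"
        using False less.IH by (intro ltG_single) auto
      moreover have "(\<Prod>b=k-k+1..k. \<psi> b (int n)) \<noteq> 0"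
        using nz nk by (auto simp: prod_zero_iff)
      ultimately show "\<zeta> k (int n - 2 * int k) = 0" using z[of k "int n"] False by simp
    qed
  qed
qed

definition psic :: "nat \<Rightarrow> int \<Rightarrow> 'a::comm_ring_1" where
  "psic b n = of_int (int b * (n - int b + 1))"

lemma psic_C2: "psic (n+1) (int n) = 0"
  unfolding psic_def by simp

lemma psic_C3: "psic (n+k+1) (int n) = psic k (- int n - 2)"
  unfolding psic_def by (simp add: algebra_simps)

lemma psic_nz: "1 \<le> b \<Longrightarrow> b \<le> n \<Longrightarrow> psic b (int n) \<noteq> (0::'a::{ring_char_0,idom})"
  unfolding psic_def by (simp only: of_int_eq_0_iff) simp

lemma psic_poly: "ispoly 1 (psic b :: int \<Rightarrow> 'a::field_char_0)"
proof -
  have "ispoly (0+1) (\<lambda>n. (of_int (int b) :: 'a) * (of_int n + (1 - of_int (int b))))"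
    by (intro ispoly_mult ispoly_const ispoly_add ispoly_id)
  then show ?thesis unfolding psic_def by (simp add: algebra_simps)
qed

lemma psic_prod_poly: "ispoly (card S) (\<lambda>n. \<Prod>b\<in>S. psic b n :: 'a::field_char_0)" if "finite S"
proof -
  have "ispoly (card S * 1) (\<lambda>n. \<Prod>b\<in>S. psic b n :: 'a)"
    by (rule ispoly_prod[OF that]) (rule psic_poly)
  then show ?thesis by simp
qed

lemma ispoly_root:
  assumes "ispoly E q" "q c = 0"
  shows "\<exists>q'. ispoly (E - 1) q' \<and> (\<forall>n. q n = (of_int n - of_int c) * q' n)"
proof -
  obtain p where p: "\<And>n. q n = poly p (of_int n)" and dp: "degree p \<le> E"
    using assms(1) unfolding ispoly_def by auto
  have "poly p (of_int c) = 0" using assms(2) p by simp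
  then have "[:- of_int c, 1:] dvd p" by (simp add: poly_eq_0_iff_dvd)
  then obtain r where r: "p = [:- of_int c, 1:] * r" by (elim dvdE)
  have "degree r \<le> E - 1"
  proof (cases "r = 0")
    case False
    then have "degree p = 1 + degree r" unfolding r by (subst degree_mult_eq) auto
    then show ?thesis using dp by simp
  qed simp
  then show ?thesis using p r unfolding ispoly_def
    by (intro exI[of _ "\<lambda>n. poly r (of_int n)"]) (auto simp: algebra_simps)
qed

lemma ispoly_divide:
  assumes "ispoly D f" "\<And>j::nat. j < d \<Longrightarrow> f (int j) = 0"
  shows "\<exists>q. ispoly (D - d) q \<and> (\<forall>n. f n = (\<Prod>b=1..d. (of_int n - of_int (int b) + 1)) * q n)"
  using assms(2)
proof (induction d)
  case 0 then show ?case using assms(1) by auto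
next
  case (Suc d)
  then obtain q where q: "ispoly (D - d) q" "\<And>n. f n = (\<Prod>b=1..d. (of_int n - of_int (int b) + 1)) * q n"
    by auto
  have "(\<Prod>b=1..d. (of_int (int d) - of_int (int b) + 1 :: 'a)) \<noteq> 0"
  proof -
    have "(of_int (int d) - of_int (int b) + 1 :: 'a) \<noteq> 0" if "b \<in> {1..d}" for b
    proof -
      have "(of_int (int d) - of_int (int b) + 1 :: 'a) = of_int (int d - int b + 1)" by simp
      moreover have "int d - int b + 1 \<noteq> 0" using that by auto
      ultimately show ?thesis by (metis of_int_eq_0_iff)
    qed
    then show ?thesis by (auto simp: prod_zero_iff)
  qed
  moreover have "f (int d) = 0" using Suc.prems by simp
  ultimately have "q (int d) = 0" using q(2)[of "int d"] by simp
  then obtain q' where q': "ispoly (D - d - 1) q'" "\<And>n. q n = (of_int n - of_int (int d)) * q' n"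
    using ispoly_root[OF q(1)] by blast
  have "f n = (\<Prod>b=1..Suc d. (of_int n - of_int (int b) + 1)) * q' n" for n
    using q(2)[of n] q'(2)[of n] by (simp add: algebra_simps)
  then show ?case using q'(1) by (intro exI[of _ q']) (auto simp: diff_diff_add)
qed



lemma classical_aux:
  fixes \<eta> :: "nat \<Rightarrow> int \<Rightarrow> 'a::field_char_0"
  shows "D + 1 - d = N \<Longrightarrow> (\<forall>k\<ge>d. ispoly D (\<eta> k))
   \<Longrightarrow> (\<forall>k\<ge>d. \<forall>n::nat. n+1 \<le> k \<and> k \<le> n+d \<longrightarrow> \<eta> k (int n) = 0)
   \<Longrightarrow> (\<forall>k\<ge>d. \<forall>n::nat. \<eta> (n+k+1) (int n) = \<eta> k (-int n - 2))
   \<Longrightarrow> \<exists>\<xi>. (\<forall>k<d. \<xi> k = (\<lambda>n. 0)) \<and> (\<forall>k. ispoly D (\<xi> k)) \<and> (\<exists>K. \<forall>k\<ge>K. \<xi> k = (\<lambda>n. 0))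
        \<and> (\<forall>k\<ge>d. \<forall>n. ltG d psic \<xi> k n = \<eta> k n)"
proof (induction N arbitrary: d \<eta>)
  case 0
  have z: "\<eta> k n = 0" if "k \<ge> d" for k n
  proof (rule ispoly_zero_card[of D "\<eta> k" "{int k - int d..<int k}"])
    show "ispoly D (\<eta> k)" using 0 that by auto
    show "card {int k - int d..<int k} > D" using 0 by simp
    fix m assume "m \<in> {int k - int d..<int k}"
    then obtain n' where "m = int n'" "n' + 1 \<le> k" "k \<le> n' + d"
      using \<open>k \<ge> d\<close> by (intro that[of "nat m"]) auto
    then show "\<eta> k m = 0" using 0(3) \<open>k \<ge> d\<close> by auto
  qed simp
  show ?case
    by (intro exI[of _ "\<lambda>k n. 0"]) (auto simp: ltG_zero z ispoly_zero)
next
  case (Suc N)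
  then have dD: "d \<le> D" by simp
  obtain q where q: "ispoly (D - d) q" "\<And>n. \<eta> d n = (\<Prod>b=1..d. (of_int n - of_int (int b) + 1)) * q n"
    using ispoly_divide[of D "\<eta> d" d] Suc.prems by auto
  define c where "c = (\<Prod>b=1..d. of_int (int b) :: 'a)"
  have c0: "c \<noteq> 0" unfolding c_def by (auto simp: prod_zero_iff)
  define g where "g = (\<lambda>m. q (m + 2 * int d) * (1 / c))"
  have gp: "ispoly (D - d) g"
    using ispoly_mult[OF ispoly_shift[OF q(1), of "2 * int d"] ispoly_const[of 0 "1/c"]]
    unfolding g_def by simp
  have key: "(\<Prod>b=1..d. psic b n) * g (n - 2 * int d) = \<eta> d n" for n
  proof -
    have "(\<Prod>b=1..d. psic b n) = (\<Prod>b=1..d. of_int (int b) * (of_int n - of_int (int b) + 1) :: 'a)"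
      unfolding psic_def by (intro prod.cong) (auto simp: algebra_simps)
    also have "\<dots> = c * (\<Prod>b=1..d. (of_int n - of_int (int b) + 1))"
      unfolding c_def by (rule prod.distrib)
    finally show ?thesis using c0 q(2)[of n] unfolding g_def by simp
  qed
  define \<delta> where "\<delta> = (\<lambda>a. if a = d then g else (\<lambda>n. 0))"
  have P\<delta>: "ltG d psic \<delta> k n = (\<Prod>b=k-d+1..k. psic b n) * g (n - 2 * int k)" if "k \<ge> d" for k n
    using that by (subst ltG_single[of d d k]) (auto simp: \<delta>_def)
  have \<delta>poly: "ispoly D (ltG d psic \<delta> k)" if "k \<ge> d" for k
  proof -
    have "ispoly (card {k-d+1..k} + (D - d)) (\<lambda>n. (\<Prod>b=k-d+1..k. psic b n) * g (n + (- 2 * int k)))"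
      by (intro ispoly_mult psic_prod_poly ispoly_shift gp) simp
    moreover have "ltG d psic \<delta> k = (\<lambda>n. (\<Prod>b=k-d+1..k. psic b n) * g (n - 2 * int k))"
      using P\<delta> that by auto
    ultimately show ?thesis using that dD by simp
  qed
  have \<delta>d: "ltG d psic \<delta> d n = \<eta> d n" for n
    using P\<delta>[of d n] key[of n] by simp
  define \<eta>' where "\<eta>' = (\<lambda>k n. if k \<le> d then 0 else \<eta> k n - ltG d psic \<delta> k n)"
  have A: "\<forall>k\<ge>Suc d. ispoly D (\<eta>' k)"
    using Suc.prems(2) \<delta>poly unfolding \<eta>'_def by (auto intro: ispoly_diff)
  have symL: "ltG d psic \<delta> (n+k+1) (int n) = ltG d psic \<delta> k (- int n - 2)" if "k \<ge> d" for k n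
    using that by (intro ltG_sym psic_C2 psic_C3)
  have B: "\<forall>k\<ge>Suc d. \<forall>n::nat. n+1 \<le> k \<and> k \<le> n + Suc d \<longrightarrow> \<eta>' k (int n) = 0"
  proof (intro allI impI)
    fix k n assume k: "k \<ge> Suc d" and r: "n+1 \<le> k \<and> k \<le> n + Suc d"
    show "\<eta>' k (int n) = 0"
    proof (cases "k \<le> n + d")
      case True
      then have "\<eta> k (int n) = 0" using Suc.prems(3) k r by auto
      moreover have "ltG d psic \<delta> k (int n) = 0" using True r by (intro ltG_vanish psic_C2) auto
      ultimately show ?thesis unfolding \<eta>'_def by simp
    next
      case False
      then have kk: "k = n + d + 1" using r by simp
      have "\<eta> k (int n) = \<eta> d (- int n - 2)" using Suc.prems(4) kk by auto
      moreover have "ltG d psic \<delta> k (int n) = ltG d psic \<delta> d (- int n - 2)" using symL[of d n] kk by simp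
      ultimately show ?thesis unfolding \<eta>'_def using k \<delta>d by simp
    qed
  qed
  have C: "\<forall>k\<ge>Suc d. \<forall>n::nat. \<eta>' (n+k+1) (int n) = \<eta>' k (-int n - 2)"
    using Suc.prems(4) symL unfolding \<eta>'_def by auto
  have "D + 1 - Suc d = N" using Suc.prems(1) by simp
  from Suc.IH[OF this A B C] obtain \<xi>' where
    x1: "\<forall>k<Suc d. \<xi>' k = (\<lambda>n. 0)" and x2: "\<forall>k. ispoly D (\<xi>' k)"
    and x3: "\<exists>K. \<forall>k\<ge>K. \<xi>' k = (\<lambda>n. 0)" and x4: "\<forall>k\<ge>Suc d. \<forall>n. ltG (Suc d) psic \<xi>' k n = \<eta>' k n"
    by blast
  obtain K where K: "\<forall>k\<ge>K. \<xi>' k = (\<lambda>n. 0)" using x3 by blast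
  define \<xi> where "\<xi> = (\<lambda>a n. \<delta> a n + \<xi>' a n)"
  have lt: "ltG d psic \<xi> k n = ltG d psic \<delta> k n + ltG (Suc d) psic \<xi>' k n" for k n
  proof -
    have "ltG d psic \<xi>' = ltG (Suc d) psic \<xi>'" using x1 by (intro ltG_lower) auto
    then show ?thesis unfolding \<xi>_def ltG_add by simp
  qed
  show ?case
  proof (intro exI[of _ \<xi>] conjI allI impI)
    fix k assume "k < d" then show "\<xi> k = (\<lambda>n. 0)" using x1 unfolding \<xi>_def \<delta>_def by auto
  next
    fix k show "ispoly D (\<xi> k)"
      unfolding \<xi>_def \<delta>_def using x2 ispoly_mono[OF gp, of D] by (auto intro!: ispoly_add ispoly_zero)
  next
    show "\<exists>K. \<forall>k\<ge>K. \<xi> k = (\<lambda>n. 0)"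
      using K by (intro exI[of _ "max K (Suc d)"]) (auto simp: \<xi>_def \<delta>_def)
  next
    fix k n assume k: "k \<ge> d"
    show "ltG d psic \<xi> k n = \<eta> k n"
    proof (cases "k = d")
      case True
      have "ltG (Suc d) psic \<xi>' d n = 0" unfolding ltG_def by simp
      then show ?thesis using lt[of k n] \<delta>d[of n] True by simp
    next
      case False
      then show ?thesis using lt[of k n] x4 k unfolding \<eta>'_def by auto
    qed
  qed
qed

lemma classical:
  fixes \<eta> :: "nat \<Rightarrow> int \<Rightarrow> 'a::field_char_0"
  assumes "\<forall>k\<ge>d. ispoly D (\<eta> k)"
   "\<forall>k\<ge>d. \<forall>n::nat. n+1 \<le> k \<and> k \<le> n+d \<longrightarrow> \<eta> k (int n) = 0"
   "\<forall>k\<ge>d. \<forall>n::nat. \<eta> (n+k+1) (int n) = \<eta> k (-int n - 2)"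
  shows "\<exists>\<xi>. (\<forall>k<d. \<xi> k = (\<lambda>n. 0)) \<and> (\<forall>k. ispoly D (\<xi> k)) \<and> (\<exists>K. \<forall>k\<ge>K. \<xi> k = (\<lambda>n. 0))
        \<and> (\<forall>k\<ge>d. \<forall>n. ltG d psic \<xi> k n = \<eta> k n)"
  using classical_aux[OF refl assms] .





lemma fps_prod_nth0: "(\<Prod>b\<in>S. f b) $ 0 = (\<Prod>b\<in>S. f b $ 0)"
  by (induction S rule: infinite_finite_induct) auto

lemma ltG_nth0: "ltG d \<psi> \<xi> k n $ 0 = ltG d (\<lambda>b n. \<psi> b n $ 0) (\<lambda>a m. \<xi> a m $ 0) k n"
  unfolding ltG_def by (simp add: fps_sum_nth fps_prod_nth0)

lemma ltG_cong_psi: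
  assumes "\<And>b n. b \<ge> 1 \<Longrightarrow> \<psi> b n = \<psi>' b n"
  shows "ltG d \<psi> \<xi> = ltG d \<psi>' \<xi>"
  unfolding ltG_def using assms by (auto intro!: ext sum.cong prod.cong)

lemma ispoly_fps_mult:
  assumes "\<forall>j\<le>m. ispoly B (\<lambda>n. f n $ j)" "\<forall>j\<le>m. ispoly E (\<lambda>n. g n $ j)"
  shows "\<forall>j\<le>m. ispoly (B+E) (\<lambda>n. (f n * g n) $ j)"
proof (intro allI impI)
  fix j assume j: "j \<le> m"
  have "ispoly (B+E) (\<lambda>n. \<Sum>i\<in>{0..j}. f n $ i * g n $ (j - i))"
    using assms j by (intro ispoly_sum ispoly_mult) auto
  then show "ispoly (B+E) (\<lambda>n. (f n * g n) $ j)" by (simp add: fps_mult_nth)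
qed

lemma ispoly_fps_prod:
  assumes "finite S" "\<forall>b\<in>S. \<forall>j\<le>m. ispoly B (\<lambda>n. F b n $ j)"
  shows "\<forall>j\<le>m. ispoly (card S * B) (\<lambda>n. (\<Prod>b\<in>S. F b n) $ j)"
  using assms
proof (induction S rule: finite_induct)
  case empty
  then show ?case by (auto simp: ispoly_const)
next
  case (insert x S)
  have "\<forall>j\<le>m. ispoly (B + card S * B) (\<lambda>n. (F x n * (\<Prod>b\<in>S. F b n)) $ j)"
    using insert by (intro ispoly_fps_mult) auto
  then show ?case using insert by simp
qed

lemma regular_unif:
  assumes "regular_seq d f"
  shows "\<exists>B. \<forall>j\<le>m. \<forall>k\<ge>d. ispoly B (\<lambda>n. f k n $ j)"
proof (induction m)
  case 0
  then show ?case using assms unfolding regular_seq_def ispoly_def by auto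
next
  case (Suc m)
  then obtain B where B: "\<forall>j\<le>m. \<forall>k\<ge>d. ispoly B (\<lambda>n. f k n $ j)" by blast
  obtain B' where B': "\<forall>k\<ge>d. ispoly B' (\<lambda>n. f k n $ Suc m)"
    using assms unfolding regular_seq_def ispoly_def by blast
  show ?case
    by (rule exI[of _ "max B B'"]) (metis B B' ispoly_mono le_Suc_eq max.cobounded1 max.cobounded2)
qed

lemma regular_intro:
  assumes "\<And>m. \<exists>B. \<forall>k\<ge>d. ispoly B (\<lambda>n. f k n $ m)"
  shows "regular_seq d f"
  using assms unfolding regular_seq_def ispoly_def by blast

lemma summable_unif:
  assumes "summable_seq d f"
  shows "\<exists>K. \<forall>j\<le>m. \<forall>k\<ge>K. \<forall>n. f k n $ j = 0"
proof (induction m)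
  case 0
  then show ?case using assms unfolding summable_seq_def by (metis le_zero_eq max.bounded_iff)
next
  case (Suc m)
  then obtain K where K: "\<forall>j\<le>m. \<forall>k\<ge>K. \<forall>n. f k n $ j = 0" by blast
  obtain K' where K': "\<forall>k\<ge>max d K'. \<forall>n. f k n $ Suc m = 0"
    using assms unfolding summable_seq_def by blast
  show ?case
    by (rule exI[of _ "max K (max d K')"]) (metis K K' le_Suc_eq max.bounded_iff)
qed

lemma ltG_nth: "k \<ge> d \<Longrightarrow> ltG d \<psi> \<xi> k n $ m = (\<Sum>a=d..k. ((\<Prod>b=k-a+1..k. \<psi> b n) * \<xi> a (n - 2 * int k)) $ m)"
  unfolding ltG_def by (simp add: fps_sum_nth)

lemma forward_regular:
  fixes \<psi> \<xi> :: "'a::field_char_0 seq"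
  assumes "regular_seq 1 \<psi>" "regular_seq d \<xi>" "summable_seq d \<xi>" "\<xi> \<in> Cseq d"
  shows "regular_seq d (ltG d \<psi> \<xi>)"
proof (rule regular_intro)
  fix m
  obtain B where B: "\<forall>j\<le>m. \<forall>k\<ge>1. ispoly B (\<lambda>n. \<psi> k n $ j)" using regular_unif[OF assms(1)] by blast
  obtain E where E: "\<forall>j\<le>m. \<forall>k\<ge>d. ispoly E (\<lambda>n. \<xi> k n $ j)" using regular_unif[OF assms(2)] by blast
  obtain K where K: "\<forall>j\<le>m. \<forall>k\<ge>K. \<forall>n. \<xi> k n $ j = 0" using summable_unif[OF assms(3)] by blast
  have "ispoly (K*B+E) (\<lambda>n. ltG d \<psi> \<xi> k n $ m)" if k: "k \<ge> d" for k
  proof -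
    have "ispoly (K*B+E) (\<lambda>n. ((\<Prod>b=k-a+1..k. \<psi> b n) * \<xi> a (n - 2 * int k)) $ m)"
      if a: "a \<in> {d..k}" for a
    proof (cases "a < K")
      case True
      have "\<forall>j\<le>m. ispoly (card {k-a+1..k} * B + E) (\<lambda>n. ((\<Prod>b=k-a+1..k. \<psi> b n) * \<xi> a (n + (- 2 * int k))) $ j)"
      proof (rule ispoly_fps_mult)
        show "\<forall>j\<le>m. ispoly (card {k - a + 1..k} * B) (\<lambda>n. (\<Prod>b = k - a + 1..k. \<psi> b n) $ j)"
          using B a by (intro ispoly_fps_prod) auto
        show "\<forall>j\<le>m. ispoly E (\<lambda>n. \<xi> a (n + - 2 * int k) $ j)"
        proof (intro allI impI)
          fix j assume "j \<le> m"
          then have "ispoly E (\<lambda>n. \<xi> a n $ j)" using E a by auto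
          from ispoly_shift[OF this, of "- 2 * int k"] show "ispoly E (\<lambda>n. \<xi> a (n + - 2 * int k) $ j)" .
        qed
      qed
      moreover have "card {k-a+1..k} * B + E \<le> K*B+E" using True a by simp
      ultimately show ?thesis by (auto intro: ispoly_mono)
    next
      case False
      have "((\<Prod>b=k-a+1..k. \<psi> b n) * \<xi> a (n - 2 * int k)) $ m = 0" for n
        using K False by (simp add: fps_mult_nth)
      then show ?thesis by (simp add: ispoly_zero)
    qed
    then have "ispoly (K*B+E) (\<lambda>n. \<Sum>a=d..k. ((\<Prod>b=k-a+1..k. \<psi> b n) * \<xi> a (n - 2 * int k)) $ m)"
      by (intro ispoly_sum) auto
    then show ?thesis using k by (simp add: ltG_nth)
  qed
  then show "\<exists>B. \<forall>k\<ge>d. ispoly B (\<lambda>n. ltG d \<psi> \<xi> k n $ m)" by blast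
qed

lemma colouring_C2: "colouring \<psi> \<Longrightarrow> \<psi> (n+1) (int n) = 0"
  unfolding colouring_def by auto

lemma colouring_C3: "colouring \<psi> \<Longrightarrow> k \<ge> 1 \<Longrightarrow> \<psi> (n+k+1) (int n) = \<psi> k (- int n - 2)"
  unfolding colouring_def by auto

lemma colouring_C1: "colouring \<psi> \<Longrightarrow> k \<ge> 1 \<Longrightarrow> \<psi> k n $ 0 = psic k n"
  unfolding colouring_def psic_def by auto

lemma forward_verma:
  assumes "colouring \<psi>"
  shows "verma_type d (ltG d \<psi> \<xi>)"
proof -
  have c2: "\<And>n::nat. \<psi> (n+1) (int n) = 0" using colouring_C2[OF assms] .
  have c3: "\<And>k n::nat. k \<ge> 1 \<Longrightarrow> \<psi> (n+k+1) (int n) = \<psi> k (- int n - 2)" using colouring_C3[OF assms] .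
  show ?thesis unfolding verma_type_def
    using ltG_vanish[where \<psi>=\<psi>, OF c2] ltG_sym[where \<psi>=\<psi>, OF c2 c3] by blast
qed

lemma Cseq_ltG: "ltG d \<psi> \<xi> \<in> Cseq d"
  unfolding Cseq_def ltG_def by auto

lemma colouring_nz:
  assumes "colouring \<psi>" "1 \<le> b" "b \<le> n"
  shows "\<psi> b (int n) \<noteq> 0"
proof
  assume "\<psi> b (int n) = 0"
  then have "psic b (int n) = (0::'a)" using colouring_C1[OF assms(1,2)] by (metis fps_zero_nth)
  moreover have "psic b (int n) \<noteq> (0::'a)" by (rule psic_nz[OF assms(2,3)])
  ultimately show False by simp
qed

lemma injective:
  fixes \<psi> \<xi>1 \<xi>2 :: "'a::field_char_0 seq"
  assumes col: "colouring \<psi>" and x1: "\<xi>1 \<in> Cseq d" "regular_seq d \<xi>1" and x2: "\<xi>2 \<in> Cseq d" "regular_seq d \<xi>2"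
    and eq: "ltG d \<psi> \<xi>1 = ltG d \<psi> \<xi>2"
  shows "\<xi>1 = \<xi>2"
proof -
  define \<zeta> where "\<zeta> = (\<lambda>k n. \<xi>1 k n - \<xi>2 k n)"
  have "\<zeta> k = (\<lambda>n. 0)" for k
  proof (rule ltG_inj[of d \<psi> \<zeta>])
    show "ltG d \<psi> \<zeta> k n = 0" for k n unfolding \<zeta>_def ltG_diff eq by simp
    show "\<zeta> k = (\<lambda>n. 0)" if "k < d" for k using x1 x2 that unfolding \<zeta>_def Cseq_def by auto
    show "\<psi> b (int n) \<noteq> 0" if "1 \<le> b" "b \<le> n" for b n using colouring_nz[OF col that] .
  next
    fix a assume h: "\<And>n::nat. n \<ge> a \<Longrightarrow> \<zeta> a (int n - 2 * int a) = 0"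
    show "\<zeta> a = (\<lambda>n. 0)"
    proof (cases "a < d")
      case True then show ?thesis using x1 x2 unfolding \<zeta>_def Cseq_def by auto
    next
      case False
      show ?thesis
      proof (intro ext fps_ext)
        fix m j
        obtain B1 where "ispoly B1 (\<lambda>n. \<xi>1 a n $ j)" using x1(2) False unfolding regular_seq_def ispoly_def
          by (meson not_le)
        moreover obtain B2 where "ispoly B2 (\<lambda>n. \<xi>2 a n $ j)" using x2(2) False unfolding regular_seq_def ispoly_def
          by (meson not_le)
        ultimately have p: "ispoly (B1+B2) (\<lambda>n. \<zeta> a n $ j)"
          unfolding \<zeta>_def by (auto intro!: ispoly_diff elim: ispoly_mono)
        have "\<zeta> a n $ j = 0" if "n \<ge> - int a" for n
        proof -
          have "n = int (nat (n + 2 * int a)) - 2 * int a" "nat (n + 2 * int a) \<ge> a" using that by auto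
          then show ?thesis using h[of "nat (n + 2 * int a)"] by (metis fps_zero_nth)
        qed
        then show "\<zeta> a m $ j = (\<lambda>n. 0) m $ j" using ispoly_zero_inf[OF p, of "- int a" m] by simp
      qed
    qed
  qed
  then show ?thesis unfolding \<zeta>_def
  proof (intro ext)
    fix k n assume "\<And>k. (\<lambda>n. \<xi>1 k n - \<xi>2 k n) = (\<lambda>n. 0)"
    from fun_cong[OF this[of k], of n] show "\<xi>1 k n = \<xi>2 k n" by simp
  qed
qed





definition lift :: "(nat \<Rightarrow> int \<Rightarrow> 'a) \<Rightarrow> 'a::field_char_0 seq" where
  "lift \<xi> = (\<lambda>k n. fps_const (\<xi> k n))"

definition clsP :: "nat \<Rightarrow> 'a::field_char_0 seq \<Rightarrow> (nat \<Rightarrow> int \<Rightarrow> 'a) \<Rightarrow> bool" where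
  "clsP d \<eta> \<xi> \<longleftrightarrow> (\<forall>k<d. \<xi> k = (\<lambda>n. 0)) \<and> (\<exists>D. \<forall>k. ispoly D (\<xi> k)) \<and> (\<exists>K. \<forall>k\<ge>K. \<xi> k = (\<lambda>n. 0))
     \<and> (\<forall>k\<ge>d. \<forall>n. ltG d psic \<xi> k n = \<eta> k n $ 0)"

definition cls :: "nat \<Rightarrow> 'a::field_char_0 seq \<Rightarrow> (nat \<Rightarrow> int \<Rightarrow> 'a)" where
  "cls d \<eta> = (SOME \<xi>. clsP d \<eta> \<xi>)"

definition step :: "'a::field_char_0 seq \<Rightarrow> nat \<Rightarrow> 'a seq \<Rightarrow> 'a seq" where
  "step \<psi> d \<eta> = (\<lambda>k n. fps_shift 1 (\<eta> k n - ltG d \<psi> (lift (cls d \<eta>)) k n))"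

primrec etas :: "'a::field_char_0 seq \<Rightarrow> nat \<Rightarrow> 'a seq \<Rightarrow> nat \<Rightarrow> 'a seq" where
  "etas \<psi> d \<eta> 0 = \<eta>"
| "etas \<psi> d \<eta> (Suc m) = step \<psi> d (etas \<psi> d \<eta> m)"

definition good :: "nat \<Rightarrow> 'a::field_char_0 seq \<Rightarrow> bool" where
  "good d \<eta> \<longleftrightarrow> \<eta> \<in> Cseq d \<and> regular_seq d \<eta> \<and> verma_type d \<eta>"

lemma cls_exists:
  assumes "good d \<eta>"
  shows "clsP d \<eta> (cls d \<eta>)"
proof -
  obtain D where D: "\<forall>k\<ge>d. ispoly D (\<lambda>n. \<eta> k n $ 0)"
    using assms unfolding good_def regular_seq_def ispoly_def by blast
  have v1: "\<forall>k\<ge>d. \<forall>n::nat. n+1 \<le> k \<and> k \<le> n+d \<longrightarrow> \<eta> k (int n) $ 0 = 0"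
    using assms unfolding good_def verma_type_def by auto
  have v2: "\<forall>k\<ge>d. \<forall>n::nat. \<eta> (n+k+1) (int n) $ 0 = \<eta> k (-int n - 2) $ 0"
    using assms unfolding good_def verma_type_def by auto
  from classical[of d D "\<lambda>k n. \<eta> k n $ 0", OF D v1 v2]
  have "\<exists>\<xi>. clsP d \<eta> \<xi>" unfolding clsP_def by blast
  then show ?thesis unfolding cls_def by (rule someI_ex)
qed

lemma lift_props:
  assumes "clsP d \<eta> \<xi>"
  shows "lift \<xi> \<in> Cseq d" "regular_seq d (lift \<xi>)" "summable_seq d (lift \<xi>)"
proof -
  obtain D where D: "\<forall>k. ispoly D (\<xi> k)" using assms unfolding clsP_def by blast
  obtain K where K: "\<forall>k\<ge>K. \<xi> k = (\<lambda>n. 0)" using assms unfolding clsP_def by blast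
  show "lift \<xi> \<in> Cseq d" using assms unfolding clsP_def Cseq_def lift_def by auto
  show "regular_seq d (lift \<xi>)"
  proof (rule regular_intro)
    fix m
    show "\<exists>B. \<forall>k\<ge>d. ispoly B (\<lambda>n. lift \<xi> k n $ m)"
      using D by (cases m) (auto simp: lift_def ispoly_zero)
  qed
  show "summable_seq d (lift \<xi>)"
    unfolding summable_seq_def
  proof
    fix m show "\<exists>K. \<forall>k\<ge>max d K. \<forall>n. lift \<xi> k n $ m = 0"
      using K by (cases m) (auto simp: lift_def intro!: exI[of _ K])
  qed
qed

lemma ltG_lift0:
  assumes col: "colouring \<psi>" and c: "clsP d \<eta> \<xi>" and e: "\<eta> \<in> Cseq d"
  shows "(\<eta> k n - ltG d \<psi> (lift \<xi>) k n) $ 0 = 0"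
proof (cases "k < d")
  case True
  then show ?thesis using e unfolding Cseq_def ltG_def by auto
next
  case False
  have "ltG d \<psi> (lift \<xi>) k n $ 0 = ltG d (\<lambda>b n. \<psi> b n $ 0) (\<lambda>a m. lift \<xi> a m $ 0) k n"
    by (rule ltG_nth0)
  also have "(\<lambda>a m. lift \<xi> a m $ 0) = \<xi>" unfolding lift_def by simp
  also have "ltG d (\<lambda>b n. \<psi> b n $ 0) \<xi> = ltG d psic \<xi>"
    by (rule ltG_cong_psi) (rule colouring_C1[OF col])
  finally show ?thesis using c False unfolding clsP_def by simp
qed

lemma step_good:
  assumes col: "colouring \<psi>" and reg: "regular_seq 1 \<psi>" and g: "good d \<eta>"
  shows "good d (step \<psi> d \<eta>)"
proof -
  let ?\<xi> = "lift (cls d \<eta>)"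
  have c: "clsP d \<eta> (cls d \<eta>)" by (rule cls_exists[OF g])
  note lp = lift_props[OF c]
  have rl: "regular_seq d (ltG d \<psi> ?\<xi>)" by (rule forward_regular[OF reg lp(2) lp(3) lp(1)])
  have vl: "verma_type d (ltG d \<psi> ?\<xi>)" by (rule forward_verma[OF col])
  have C: "step \<psi> d \<eta> \<in> Cseq d"
    using g unfolding good_def Cseq_def step_def ltG_def by auto
  have R: "regular_seq d (step \<psi> d \<eta>)"
  proof (rule regular_intro)
    fix m
    obtain B1 where B1: "\<forall>k\<ge>d. ispoly B1 (\<lambda>n. \<eta> k n $ Suc m)"
      using g unfolding good_def regular_seq_def ispoly_def by blast
    obtain B2 where B2: "\<forall>k\<ge>d. ispoly B2 (\<lambda>n. ltG d \<psi> ?\<xi> k n $ Suc m)"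
      using rl unfolding regular_seq_def ispoly_def by blast
    have "\<forall>k\<ge>d. ispoly (B1+B2) (\<lambda>n. step \<psi> d \<eta> k n $ m)"
    proof (intro allI impI)
      fix k assume "k \<ge> d"
      then have "ispoly (B1+B2) (\<lambda>n. \<eta> k n $ Suc m)" "ispoly (B1+B2) (\<lambda>n. ltG d \<psi> ?\<xi> k n $ Suc m)"
        using B1 B2 ispoly_mono le_add1 le_add2 by blast+
      then show "ispoly (B1+B2) (\<lambda>n. step \<psi> d \<eta> k n $ m)"
        unfolding step_def by (auto intro: ispoly_diff)
    qed
    then show "\<exists>B. \<forall>k\<ge>d. ispoly B (\<lambda>n. step \<psi> d \<eta> k n $ m)" by blast
  qed
  have V: "verma_type d (step \<psi> d \<eta>)"
    using g vl unfolding good_def verma_type_def step_def by auto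
  show ?thesis using C R V unfolding good_def by blast
qed

lemma etas_good:
  assumes col: "colouring \<psi>" and reg: "regular_seq 1 \<psi>" and g: "good d \<eta>"
  shows "good d (etas \<psi> d \<eta> m)"
  by (induction m) (auto simp: g step_good[OF col reg])

lemma etas_coeff:
  assumes col: "colouring \<psi>" and reg: "regular_seq 1 \<psi>" and g: "good d \<eta>"
  shows "etas \<psi> d \<eta> i k n $ j = (\<Sum>l=0..j. ltG d \<psi> (lift (cls d (etas \<psi> d \<eta> (i+l)))) k n $ (j - l))"
proof (induction j arbitrary: i)
  case 0
  have gi: "good d (etas \<psi> d \<eta> i)" by (rule etas_good[OF col reg g])
  have "(etas \<psi> d \<eta> i k n - ltG d \<psi> (lift (cls d (etas \<psi> d \<eta> i))) k n) $ 0 = 0"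
    using ltG_lift0[OF col cls_exists[OF gi]] gi unfolding good_def by blast
  then show ?case by simp
next
  case (Suc j)
  let ?L = "\<lambda>l. ltG d \<psi> (lift (cls d (etas \<psi> d \<eta> l))) k n"
  have "etas \<psi> d \<eta> i k n $ Suc j = etas \<psi> d \<eta> (Suc i) k n $ j + ?L i $ Suc j"
    by (simp add: step_def)
  also have "\<dots> = (\<Sum>l=0..j. ?L (Suc i + l) $ (j - l)) + ?L i $ Suc j"
    using Suc.IH[of "Suc i"] by simp
  also have "\<dots> = (\<Sum>l=0..Suc j. ?L (i + l) $ (Suc j - l))"
    by (subst sum.atLeast0_atMost_Suc_shift) simp
  finally show ?case .
qed

definition limxi :: "'a::field_char_0 seq \<Rightarrow> nat \<Rightarrow> 'a seq \<Rightarrow> 'a seq" where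
  "limxi \<psi> d \<eta> = (\<lambda>k n. Abs_fps (\<lambda>m. cls d (etas \<psi> d \<eta> m) k n))"

lemma surjective:
  fixes \<psi> :: "'a::field_char_0 seq"
  assumes col: "colouring \<psi>" and reg: "regular_seq 1 \<psi>" and g: "good d \<eta>"
  shows "limxi \<psi> d \<eta> \<in> Cseq d" "regular_seq d (limxi \<psi> d \<eta>)" "summable_seq d (limxi \<psi> d \<eta>)"
    "ltG d \<psi> (limxi \<psi> d \<eta>) = \<eta>"
proof -
  let ?x = "\<lambda>m. cls d (etas \<psi> d \<eta> m)"
  have c: "clsP d (etas \<psi> d \<eta> m) (?x m)" for m
    by (rule cls_exists[OF etas_good[OF col reg g]])
  show "limxi \<psi> d \<eta> \<in> Cseq d"
    using c unfolding Cseq_def limxi_def clsP_def by (auto intro!: ext fps_ext)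
  show "regular_seq d (limxi \<psi> d \<eta>)"
  proof (rule regular_intro)
    fix m
    obtain D where "\<forall>k. ispoly D (?x m k)" using c[of m] unfolding clsP_def by blast
    then show "\<exists>B. \<forall>k\<ge>d. ispoly B (\<lambda>n. limxi \<psi> d \<eta> k n $ m)"
      unfolding limxi_def by auto
  qed
  show "summable_seq d (limxi \<psi> d \<eta>)"
    unfolding summable_seq_def
  proof
    fix m
    obtain K where "\<forall>k\<ge>K. ?x m k = (\<lambda>n. 0)" using c[of m] unfolding clsP_def by blast
    then show "\<exists>K. \<forall>k\<ge>max d K. \<forall>n. limxi \<psi> d \<eta> k n $ m = 0"
      unfolding limxi_def by (intro exI[of _ K]) auto
  qed
  show "ltG d \<psi> (limxi \<psi> d \<eta>) = \<eta>"
  proof (intro ext fps_ext)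
    fix k n j
    show "ltG d \<psi> (limxi \<psi> d \<eta>) k n $ j = \<eta> k n $ j"
    proof (cases "k \<ge> d")
      case False
      then show ?thesis using g unfolding good_def Cseq_def ltG_def by auto
    next
      case True
      let ?P = "\<lambda>a. \<Prod>b=k-a+1..k. \<psi> b n"
      have "ltG d \<psi> (limxi \<psi> d \<eta>) k n $ j
          = (\<Sum>a=d..k. \<Sum>i=0..j. ?P a $ i * ?x (j - i) a (n - 2 * int k))"
        using True by (simp add: ltG_nth fps_mult_nth limxi_def)
      also have "\<dots> = (\<Sum>i=0..j. \<Sum>a=d..k. ?P a $ i * ?x (j - i) a (n - 2 * int k))"
        by (rule sum.swap)
      also have "\<dots> = (\<Sum>l=0..j. \<Sum>a=d..k. ?P a $ (j - l) * ?x l a (n - 2 * int k))"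
        by (subst sum.atLeastAtMost_rev) (auto intro!: sum.cong)
      also have "\<dots> = (\<Sum>l=0..j. ltG d \<psi> (lift (?x l)) k n $ (j - l))"
        using True by (simp add: ltG_nth lift_def)
      also have "\<dots> = \<eta> k n $ j"
        using etas_coeff[OF col reg g, of 0 k n j] by simp
      finally show ?thesis .
    qed
  qed
qed





lemma prod_single1: "k \<noteq> 0 \<Longrightarrow> (\<Prod>b = Suc (k - Suc 0)..k. f b) = f k"
  by (cases k) auto

lemma order0_xi:
  fixes \<psi> \<xi> :: "'a::field_char_0 seq"
  assumes col: "colouring \<psi>" and x: "\<xi> \<in> Cseq 0" "regular_seq 0 \<xi>"
    and eq: "\<And>k n. ltG 0 \<psi> \<xi> k n = \<psi> (k+1) n"
  shows "\<xi> a m $ 0 = (if a = 0 then of_int m else if a = 1 then 1 else 0)"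
proof -
  define \<zeta>s :: "nat \<Rightarrow> int \<Rightarrow> 'a" where "\<zeta>s = (\<lambda>a m. if a = 0 then of_int m else if a = 1 then 1 else 0)"
  define \<zeta> where "\<zeta> = (\<lambda>a m. \<xi> a m $ 0 - \<zeta>s a m)"
  have L: "ltG 0 psic (\<lambda>a m. \<xi> a m $ 0) k n = psic (k+1) n" for k n
  proof -
    have "ltG 0 psic (\<lambda>a m. \<xi> a m $ 0) = ltG 0 (\<lambda>b n. \<psi> b n $ 0) (\<lambda>a m. \<xi> a m $ 0)"
      by (rule ltG_cong_psi) (simp add: colouring_C1[OF col])
    then have "ltG 0 psic (\<lambda>a m. \<xi> a m $ 0) k n = ltG 0 \<psi> \<xi> k n $ 0" by (simp add: ltG_nth0)
    also have "\<dots> = psic (k+1) n" using eq colouring_C1[OF col, of "k+1"] by simp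
    finally show ?thesis .
  qed
  have R: "ltG 0 psic \<zeta>s k n = psic (k+1) n" for k n
  proof (cases "k = 0")
    case True
    then show ?thesis unfolding ltG_def \<zeta>s_def psic_def by simp
  next
    case False
    let ?g = "\<lambda>a. (\<Prod>b=k-a+1..k. psic b n) * \<zeta>s a (n - 2 * int k)"
    have "ltG 0 psic \<zeta>s k n = (\<Sum>a\<in>{0..k}. ?g a)" unfolding ltG_def by simp
    also have "\<dots> = (\<Sum>a\<in>{0,1}. ?g a)"
      using False by (intro sum.mono_neutral_right) (auto simp: \<zeta>s_def)
    also have "\<dots> = of_int (n - 2 * int k) + psic k n" using False by (simp add: \<zeta>s_def prod_single1)
    also have "\<dots> = psic (k+1) n" unfolding psic_def by (simp add: algebra_simps)
    finally show ?thesis .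
  qed
  have z: "\<zeta> a = (\<lambda>n. 0)"
  proof (rule ltG_inj[of 0 psic \<zeta>])
    show "ltG 0 psic \<zeta> k n = 0" for k n
      unfolding \<zeta>_def ltG_diff using L R by simp
    show "psic b (int n) \<noteq> (0::'a)" if "1 \<le> b" "b \<le> n" for b n using psic_nz[OF that] .
  next
    fix a assume h: "\<And>n::nat. n \<ge> a \<Longrightarrow> \<zeta> a (int n - 2 * int a) = 0"
    obtain B where "ispoly B (\<lambda>n. \<xi> a n $ 0)" using x(2) unfolding regular_seq_def ispoly_def by blast
    moreover have "ispoly 1 (\<zeta>s a)" unfolding \<zeta>s_def
      using ispoly_id[where 'a='a] by (cases "a = 0"; cases "a = 1") (auto simp: ispoly_const)
    ultimately have p: "ispoly (B+1) (\<zeta> a)"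
      unfolding \<zeta>_def by (auto intro!: ispoly_diff elim: ispoly_mono)
    have "\<zeta> a n = 0" if "n \<ge> - int a" for n
    proof -
      have "n = int (nat (n + 2 * int a)) - 2 * int a" "nat (n + 2 * int a) \<ge> a" using that by auto
      then show ?thesis using h[of "nat (n + 2 * int a)"] by metis
    qed
    then show "\<zeta> a = (\<lambda>n. 0)" using ispoly_zero_inf[OF p] by blast
  qed simp
  show ?thesis using fun_cong[OF z, of m] unfolding \<zeta>_def \<zeta>s_def by simp
qed

lemma only_if:
  fixes \<psi> \<xi> :: "'a::field_char_0 seq"
  assumes col: "colouring \<psi>" and x: "\<xi> \<in> Cseq 0" "regular_seq 0 \<xi>" "summable_seq 0 \<xi>"
    and eq: "\<And>k n. ltG 0 \<psi> \<xi> k n = \<psi> (k+1) n"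
  shows "regular_seq 1 \<psi>"
proof -
  note o0 = order0_xi[OF col x(1,2) eq]
  have "\<exists>B. \<forall>j\<le>m. \<forall>k\<ge>1. ispoly B (\<lambda>n. \<psi> k n $ j)" for m
  proof (induction m)
    case 0
    have "ispoly 1 (\<lambda>n. \<psi> k n $ 0)" if "k \<ge> 1" for k
      using psic_poly[of k] colouring_C1[OF col that] by simp
    then show ?case by auto
  next
    case (Suc m)
    define M where "M = Suc m"
    obtain B where B: "\<forall>j\<le>m. \<forall>k\<ge>1. ispoly B (\<lambda>n. \<psi> k n $ j)" using Suc.IH by blast
    obtain E where E: "\<forall>j\<le>M. \<forall>k\<ge>0. ispoly E (\<lambda>n. \<xi> k n $ j)" using regular_unif[OF x(2)] by blast
    obtain K where K: "\<forall>j\<le>M. \<forall>k\<ge>K. \<forall>n. \<xi> k n $ j = 0" using summable_unif[OF x(3)] by blast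
    define F where "F = K*B + B + E"
    have Es: "ispoly E (\<lambda>n. \<xi> a (n - 2 * int k) $ j)" if "j \<le> M" for a k j
      using ispoly_shift[of E "\<lambda>n. \<xi> a n $ j" "- 2 * int k"] E that by simp
    have diff: "ispoly F (\<lambda>n. \<psi> (k+1) n $ M - \<psi> k n $ M)" if k: "k \<ge> 1" for k
    proof -
      let ?T = "\<lambda>a n. ((\<Prod>b=k-a+1..k. \<psi> b n) * \<xi> a (n - 2 * int k)) $ M"
      have T: "ispoly F (\<lambda>n. ?T a n - (if a = 1 then \<psi> k n $ M else 0))" if a: "a \<in> {0..k}" for a
      proof -
        consider "a = 0" | "a = 1" | "a \<ge> 2" "a \<ge> K" | "a \<ge> 2" "a < K" by linarith
        then show ?thesis
        proof cases
          case 1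
          then show ?thesis using Es[of M 0 k] unfolding F_def by (auto elim: ispoly_mono)
        next
          case 2
          have "?T a n - \<psi> k n $ M = (\<Sum>i=0..m. \<psi> k n $ i * \<xi> 1 (n - 2 * int k) $ (M - i))" for n
            using 2 o0 k unfolding M_def by (simp add: fps_mult_nth prod_single1)
          moreover have "ispoly (B+E) (\<lambda>n. \<Sum>i=0..m. \<psi> k n $ i * \<xi> 1 (n - 2 * int k) $ (M - i))"
            using B k Es unfolding M_def by (intro ispoly_sum ispoly_mult) auto
          ultimately show ?thesis using 2 unfolding F_def by (auto elim: ispoly_mono)
        next
          case 3
          have "?T a n = 0" for n using 3 K by (simp add: fps_mult_nth)
          then show ?thesis using 3 by (simp add: ispoly_zero)
        next
          case 4
          have P: "\<forall>j\<le>m. ispoly (card {k-a+1..k} * B) (\<lambda>n. (\<Prod>b=k-a+1..k. \<psi> b n) $ j)"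
            using B a by (intro ispoly_fps_prod) auto
          have "?T a n = (\<Sum>i=0..m. (\<Prod>b=k-a+1..k. \<psi> b n) $ i * \<xi> a (n - 2 * int k) $ (M - i))" for n
            using 4 o0 unfolding M_def by (simp add: fps_mult_nth)
          moreover have "ispoly (card {k-a+1..k} * B + E) (\<lambda>n. \<Sum>i=0..m. (\<Prod>b=k-a+1..k. \<psi> b n) $ i * \<xi> a (n - 2 * int k) $ (M - i))"
            using P Es unfolding M_def by (intro ispoly_sum ispoly_mult) auto
          moreover have "card {k-a+1..k} * B + E \<le> F"
          proof -
            have "card {k-a+1..k} * B + E = a * B + E" using a by simp
            also have "\<dots> \<le> K*B + B + E" using mult_le_mono1[of a K B] 4 by linarith
            finally show ?thesis unfolding F_def .
          qed
          ultimately show ?thesis using 4 by (auto elim: ispoly_mono)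
        qed
      qed
      have "ispoly F (\<lambda>n. \<Sum>a\<in>{0..k}. ?T a n - (if a = 1 then \<psi> k n $ M else 0))"
        using T by (intro ispoly_sum) auto
      moreover have "(\<Sum>a\<in>{0..k}. ?T a n - (if a = 1 then \<psi> k n $ M else 0)) = \<psi> (k+1) n $ M - \<psi> k n $ M" for n
      proof -
        have "(\<Sum>a\<in>{0..k}. (if a = 1 then \<psi> k n $ M else 0)) = \<psi> k n $ M"
          using k by (simp add: sum.delta')
        moreover have "(\<Sum>a\<in>{0..k}. ?T a n) = \<psi> (k+1) n $ M"
          using eq[of k n] ltG_nth[of 0 k \<psi> \<xi> n M] by simp
        ultimately show ?thesis by (simp add: sum_subtractf)
      qed
      ultimately show ?thesis by simp
    qed
    have all: "k \<ge> 1 \<Longrightarrow> ispoly F (\<lambda>n. \<psi> k n $ M)" for k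
    proof (induction k)
      case 0 then show ?case by simp
    next
      case (Suc k)
      show ?case
      proof (cases "k = 0")
        case True
        have "\<psi> 1 n $ M = \<xi> 0 n $ M" for n using eq[of 0 n] unfolding ltG_def by simp
        moreover have "ispoly E (\<lambda>n. \<xi> 0 n $ M)" using E by simp
        then have "ispoly F (\<lambda>n. \<xi> 0 n $ M)" unfolding F_def by (rule ispoly_mono) simp
        ultimately show ?thesis using True by simp
      next
        case False
        then have "ispoly F (\<lambda>n. \<psi> k n $ M + (\<psi> (k+1) n $ M - \<psi> k n $ M))"
          using Suc.IH diff[of k] by (intro ispoly_add) auto
        then show ?thesis by simp
      qed
    qed
    show ?case
    proof (intro exI[of _ "max B F"] allI impI)
      fix j k :: nat assume "j \<le> Suc m" "1 \<le> k"
      then consider "j \<le> m" | "j = M" unfolding M_def by linarith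
      then show "ispoly (max B F) (\<lambda>n. \<psi> k n $ j)"
      proof cases
        case 1
        then have "ispoly B (\<lambda>n. \<psi> k n $ j)" using B \<open>1 \<le> k\<close> by blast
        then show ?thesis by (rule ispoly_mono) simp
      next
        case 2
        then have "ispoly F (\<lambda>n. \<psi> k n $ j)" using all \<open>1 \<le> k\<close> by blast
        then show ?thesis by (rule ispoly_mono) simp
      qed
    qed
  qed
  then show ?thesis by (intro regular_intro) blast
qed



theorem mainTheorem6:
  fixes \<psi> :: "'a::field_char_0 seq"
  assumes "colouring \<psi>"
  shows "((\<exists>\<xi>\<in>Cseq 0. regular_seq 0 \<xi> \<and> summable_seq 0 \<xi> \<and> ltimes 0 \<psi> \<xi> = shift1 \<psi>)
            \<longleftrightarrow> regular_seq 1 \<psi>)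
       \<and> (regular_seq 1 \<psi> \<longrightarrow> (\<forall>d::nat.
            (\<forall>c \<xi>1 \<xi>2. \<xi>1 \<in> Cseq d \<longrightarrow> \<xi>2 \<in> Cseq d \<longrightarrow>
                ltimes d \<psi> (\<lambda>k n. c * \<xi>1 k n + \<xi>2 k n)
                  = (\<lambda>k n. c * ltimes d \<psi> \<xi>1 k n + ltimes d \<psi> \<xi>2 k n))
          \<and> bij_betw (ltimes d \<psi>)
              {\<xi>\<in>Cseq d. regular_seq d \<xi> \<and> summable_seq d \<xi>}
              {\<eta>\<in>Cseq d. regular_seq d \<eta> \<and> verma_type d \<eta>}))"
proof (intro conjI impI allI iffI)
  note col = assms
  {
    assume "\<exists>\<xi>\<in>Cseq 0. regular_seq 0 \<xi> \<and> summable_seq 0 \<xi> \<and> ltimes 0 \<psi> \<xi> = shift1 \<psi>"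
    then obtain \<xi> where x: "\<xi> \<in> Cseq 0" "regular_seq 0 \<xi>" "summable_seq 0 \<xi>" "ltimes 0 \<psi> \<xi> = shift1 \<psi>"
      by blast
    have "ltG 0 \<psi> \<xi> k n = \<psi> (k+1) n" for k n
      using fun_cong[OF fun_cong[OF x(4), of k], of n] by (simp add: ltimes_ltG shift1_def)
    then show "regular_seq 1 \<psi>" by (rule only_if[OF col x(1-3)])
  }
  {
    assume reg: "regular_seq 1 \<psi>"
    have g: "good 0 (shift1 \<psi>)"
      unfolding good_def
    proof (intro conjI)
      show "shift1 \<psi> \<in> Cseq 0" unfolding Cseq_def by simp
      show "regular_seq 0 (shift1 \<psi>)"
        using reg unfolding regular_seq_def shift1_def by (meson le_add2)
      have "\<psi> (n + k + 1 + 1) (int n) = \<psi> (k + 1) (- int n - 2)" for n k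
        using colouring_C3[OF col, of "k+1" n] by (simp add: add.assoc)
      then show "verma_type 0 (shift1 \<psi>)"
        unfolding verma_type_def shift1_def by auto
    qed
    note s = surjective[OF col reg g]
    show "\<exists>\<xi>\<in>Cseq 0. regular_seq 0 \<xi> \<and> summable_seq 0 \<xi> \<and> ltimes 0 \<psi> \<xi> = shift1 \<psi>"
      using s by (auto simp: ltimes_ltG)
  }
  {
    fix d :: nat and c \<xi>1 \<xi>2
    show "ltimes d \<psi> (\<lambda>k n. c * \<xi>1 k n + \<xi>2 k n) = (\<lambda>k n. c * ltimes d \<psi> \<xi>1 k n + ltimes d \<psi> \<xi>2 k n)"
      by (simp add: ltimes_ltG ltG_lin)
  }
  {
    fix d :: nat
    assume reg: "regular_seq 1 \<psi>"
    show "bij_betw (ltimes d \<psi>) {\<xi>\<in>Cseq d. regular_seq d \<xi> \<and> summable_seq d \<xi>}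
              {\<eta>\<in>Cseq d. regular_seq d \<eta> \<and> verma_type d \<eta>}"
      unfolding bij_betw_def
    proof (intro conjI)
      show "inj_on (ltimes d \<psi>) {\<xi>\<in>Cseq d. regular_seq d \<xi> \<and> summable_seq d \<xi>}"
        unfolding inj_on_def ltimes_ltG using injective[OF col] by blast
      show "ltimes d \<psi> ` {\<xi>\<in>Cseq d. regular_seq d \<xi> \<and> summable_seq d \<xi>} = {\<eta>\<in>Cseq d. regular_seq d \<eta> \<and> verma_type d \<eta>}"
      proof
        show "ltimes d \<psi> ` {\<xi>\<in>Cseq d. regular_seq d \<xi> \<and> summable_seq d \<xi>} \<subseteq> {\<eta>\<in>Cseq d. regular_seq d \<eta> \<and> verma_type d \<eta>}"
          unfolding ltimes_ltG using Cseq_ltG forward_regular[OF reg] forward_verma[OF col] by blast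
        show "{\<eta>\<in>Cseq d. regular_seq d \<eta> \<and> verma_type d \<eta>} \<subseteq> ltimes d \<psi> ` {\<xi>\<in>Cseq d. regular_seq d \<xi> \<and> summable_seq d \<xi>}"
        proof
          fix \<eta> :: "'a seq" assume "\<eta> \<in> {\<eta>\<in>Cseq d. regular_seq d \<eta> \<and> verma_type d \<eta>}"
          then have g: "good d \<eta>" unfolding good_def by blast
          note s = surjective[OF col reg g]
          show "\<eta> \<in> ltimes d \<psi> ` {\<xi>\<in>Cseq d. regular_seq d \<xi> \<and> summable_seq d \<xi>}"
            unfolding ltimes_ltG using s by (intro image_eqI[of _ _ "limxi \<psi> d \<eta>"]) auto
        qed
      qed
    qed
  }
qed


end
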